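(* Let $R$ be a ring and $a\in R$. Then $a$ is feckly clean if and only if there exists $e\in R$ such that $$W(a-1)\subseteq W(e)\subseteq J\text{-spec}(R)\setminus W(a)\quad\text{and}\quad eR(1-e)\subseteq J(R).$$
   Context: Rings are associative with identity, not necessarily commutative; $J(R)$ is the Jacobson radical. An element $u\in R$ is full if $RuR=R$. An element $a\in R$ is feckly clean if there exist $e\in R$ and a full element $u\in R$ with $a=e+u$ and $eR(1-e)\subseteq J(R)$. $J\text{-spec}(R)$ is the set of all prime (two-sided) ideals $P$ of $R$ with $J(R)\subseteq P$. For an ideal $I$, $W(I)=\{P\in J\text{-spec}(R): I\subseteq P\}$, and for $a\in R$, $W(a)=W(RaR)$. *)

theory Defs
  imports Main
begin

definition left_ideal :: "'a::ring_1 set \<Rightarrow> bool" where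
  "left_ideal I \<longleftrightarrow> 0 \<in> I \<and> (\<forall>x\<in>I. \<forall>y\<in>I. x + y \<in> I) \<and> (\<forall>r. \<forall>x\<in>I. r * x \<in> I)"

definition two_sided_ideal :: "'a::ring_1 set \<Rightarrow> bool" where
  "two_sided_ideal I \<longleftrightarrow> left_ideal I \<and> (\<forall>r. \<forall>x\<in>I. x * r \<in> I)"

definition maximal_left_ideal :: "'a::ring_1 set \<Rightarrow> bool" where
  "maximal_left_ideal I \<longleftrightarrow> left_ideal I \<and> I \<noteq> UNIV \<and>
     (\<forall>L. left_ideal L \<and> I \<subseteq> L \<longrightarrow> L = I \<or> L = UNIV)"

definition jacobson :: "'a::ring_1 set" where
  "jacobson = \<Inter> {I. maximal_left_ideal I}"

text \<open>Two-sided ideal generated by a set; RuR is ideal_gen {u}.\<close>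
definition ideal_gen :: "'a::ring_1 set \<Rightarrow> 'a set" where
  "ideal_gen S = \<Inter> {I. two_sided_ideal I \<and> S \<subseteq> I}"

definition full :: "'a::ring_1 \<Rightarrow> bool" where
  "full u \<longleftrightarrow> ideal_gen {u} = UNIV"

definition feckly_clean :: "'a::ring_1 \<Rightarrow> bool" where
  "feckly_clean a \<longleftrightarrow> (\<exists>e u. full u \<and> a = e + u \<and> (\<forall>r. e * r * (1 - e) \<in> jacobson))"

definition prime_ideal :: "'a::ring_1 set \<Rightarrow> bool" where
  "prime_ideal P \<longleftrightarrow> two_sided_ideal P \<and> P \<noteq> UNIV \<and>
     (\<forall>A B. two_sided_ideal A \<and> two_sided_ideal B \<and> (\<forall>a\<in>A. \<forall>b\<in>B. a * b \<in> P)
        \<longrightarrow> A \<subseteq> P \<or> B \<subseteq> P)"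

definition J_spec :: "'a::ring_1 set set" where
  "J_spec = {P. prime_ideal P \<and> jacobson \<subseteq> P}"

definition W :: "'a::ring_1 set \<Rightarrow> 'a set set" where
  "W I = {P \<in> J_spec. I \<subseteq> P}"

definition W_elem :: "'a::ring_1 \<Rightarrow> 'a set set" where
  "W_elem a = W (ideal_gen {a})"

end

theory Submission
  imports Defs
begin

lemma li_0: "left_ideal I \<Longrightarrow> 0 \<in> I"
  unfolding left_ideal_def by simp

lemma li_add: "left_ideal I \<Longrightarrow> x \<in> I \<Longrightarrow> y \<in> I \<Longrightarrow> x + y \<in> I"
  unfolding left_ideal_def by simp

lemma li_mult: "left_ideal I \<Longrightarrow> x \<in> I \<Longrightarrow> r * x \<in> I"
  unfolding left_ideal_def by simp

lemma li_intro: "0 \<in> I \<Longrightarrow> (\<And>x y. x \<in> I \<Longrightarrow> y \<in> I \<Longrightarrow> x + y \<in> I)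
   \<Longrightarrow> (\<And>r x. x \<in> I \<Longrightarrow> r * x \<in> I) \<Longrightarrow> left_ideal I"
  unfolding left_ideal_def by simp

lemma li_neg: "left_ideal I \<Longrightarrow> x \<in> I \<Longrightarrow> - x \<in> I"
  unfolding left_ideal_def by (metis mult_minus1)

lemma li_diff: "left_ideal I \<Longrightarrow> x \<in> I \<Longrightarrow> y \<in> I \<Longrightarrow> x - y \<in> I"
  using li_neg[of I y] unfolding left_ideal_def by (metis diff_conv_add_uminus)

lemma ts_li: "two_sided_ideal I \<Longrightarrow> left_ideal I"
  unfolding two_sided_ideal_def by simp

lemma li_univ: "left_ideal I \<Longrightarrow> 1 \<in> I \<Longrightarrow> I = UNIV"
  unfolding left_ideal_def by (metis UNIV_eq_I mult.right_neutral)

lemma ts_right: "two_sided_ideal I \<Longrightarrow> x \<in> I \<Longrightarrow> x * r \<in> I"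
  unfolding two_sided_ideal_def by simp

lemma ts_intro: "left_ideal I \<Longrightarrow> (\<And>r x. x \<in> I \<Longrightarrow> x * r \<in> I) \<Longrightarrow> two_sided_ideal I"
  unfolding two_sided_ideal_def by simp

lemma ideal_gen_ts: "two_sided_ideal (ideal_gen S)"
  unfolding ideal_gen_def two_sided_ideal_def left_ideal_def by blast

lemma ideal_gen_sub: "two_sided_ideal P \<Longrightarrow> x \<in> P \<Longrightarrow> ideal_gen {x} \<subseteq> P"
  unfolding ideal_gen_def by blast

lemma ideal_gen_mem: "x \<in> ideal_gen {x}"
  unfolding ideal_gen_def by blast

lemma Jts: "P \<in> J_spec \<Longrightarrow> two_sided_ideal P"
  unfolding J_spec_def prime_ideal_def by simp

lemma Jli: "P \<in> J_spec \<Longrightarrow> left_ideal P"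
  using Jts ts_li by blast

lemma Jne: "P \<in> J_spec \<Longrightarrow> P \<noteq> UNIV"
  unfolding J_spec_def prime_ideal_def by simp

lemma W_elem_iff: "P \<in> W_elem x \<longleftrightarrow> P \<in> J_spec \<and> x \<in> P"
proof -
  have "P \<in> J_spec \<Longrightarrow> x \<in> P \<Longrightarrow> ideal_gen {x} \<subseteq> P" using ideal_gen_sub Jts by blast
  moreover have "ideal_gen {x} \<subseteq> P \<Longrightarrow> x \<in> P" using ideal_gen_mem by blast
  ultimately show ?thesis unfolding W_elem_def W_def by blast
qed

lemma max_gen:
  assumes L: "maximal_left_ideal L" and M: "left_ideal M" "L \<subseteq> M" "M \<noteq> L"
  shows "M = UNIV"
  using assms unfolding maximal_left_ideal_def by blast

lemma max_span:
  assumes L: "maximal_left_ideal L" and y: "y \<notin> L"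
  shows "\<exists>s l. l \<in> L \<and> z = s * y + l"
proof -
  define K where "K = {x. \<exists>s l. l \<in> L \<and> x = s * y + l}"
  have li: "left_ideal L" using L unfolding maximal_left_ideal_def by simp
  have "left_ideal K"
  proof (rule li_intro)
    have "0 = 0 * y + 0" by simp
    then show "0 \<in> K" unfolding K_def using li_0[OF li] by blast
  next
    fix a b assume "a \<in> K" "b \<in> K"
    then obtain s1 l1 s2 l2 where h: "a = s1*y+l1" "b = s2*y+l2" "l1 \<in> L" "l2 \<in> L" unfolding K_def by blast
    then have "a + b = (s1+s2)*y + (l1+l2)" by (simp add: algebra_simps)
    moreover have "l1+l2 \<in> L" using li_add[OF li] h by blast
    ultimately show "a + b \<in> K" unfolding K_def by blast
  next
    fix r a assume "a \<in> K"
    then obtain s1 l1 where h: "a = s1*y+l1" "l1 \<in> L" unfolding K_def by blast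
    then have "r*a = (r*s1)*y + r*l1" by (simp add: algebra_simps)
    moreover have "r*l1 \<in> L" using li_mult[OF li] h by blast
    ultimately show "r*a \<in> K" unfolding K_def by blast
  qed
  moreover have "L \<subseteq> K"
  proof
    fix l assume "l \<in> L"
    moreover have "l = 0 * y + l" by simp
    ultimately show "l \<in> K" unfolding K_def by blast
  qed
  moreover have "y \<in> K"
  proof -
    have "y = 1 * y + 0" by simp
    then show ?thesis unfolding K_def using li_0[OF li] by blast
  qed
  ultimately have "K = UNIV" using max_gen[OF L] y by blast
  then show ?thesis unfolding K_def by blast
qed

lemma colon_max:
  assumes L: "maximal_left_ideal L" and r: "r \<notin> L"
  shows "maximal_left_ideal {y. y * r \<in> L}"
proof -
  have li: "left_ideal L" using L unfolding maximal_left_ideal_def by simp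
  define C where "C = {y. y * r \<in> L}"
  have lc: "left_ideal C"
  proof (rule li_intro)
    show "0 \<in> C" unfolding C_def using li_0[OF li] by simp
  next
    fix x y assume "x \<in> C" "y \<in> C" then show "x + y \<in> C"
      unfolding C_def using li_add[OF li] by (simp add: distrib_right)
  next
    fix t x assume "x \<in> C" then show "t * x \<in> C"
      unfolding C_def using li_mult[OF li] by (simp add: mult.assoc)
  qed
  moreover have "C \<noteq> UNIV"
  proof
    assume "C = UNIV" then have "1 \<in> C" by simp
    then show False using r unfolding C_def by simp
  qed
  moreover have "K = C \<or> K = UNIV" if K: "left_ideal K" "C \<subseteq> K" for K
  proof (cases "K = C")
    case False
    then obtain k0 where k0: "k0 \<in> K" "k0 * r \<notin> L" using K unfolding C_def by blast
    define M where "M = {x. \<exists>k l. k \<in> K \<and> l \<in> L \<and> x = k * r + l}"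
    have "left_ideal M"
    proof (rule li_intro)
      have "0 = 0 * r + 0" by simp
      then show "0 \<in> M" unfolding M_def using li_0[OF li] li_0[OF K(1)] by blast
    next
      fix a b assume "a \<in> M" "b \<in> M"
      then obtain s1 l1 s2 l2 where h: "a = s1*r+l1" "b = s2*r+l2" "l1 \<in> L" "l2 \<in> L" "s1 \<in> K" "s2 \<in> K"
        unfolding M_def by blast
      then have "a + b = (s1+s2)*r + (l1+l2)" by (simp add: algebra_simps)
      moreover have "l1+l2 \<in> L" using li_add[OF li] h by blast
      moreover have "s1+s2 \<in> K" using li_add[OF K(1)] h by blast
      ultimately show "a + b \<in> M" unfolding M_def by blast
    next
      fix t a assume "a \<in> M"
      then obtain s1 l1 where h: "a = s1*r+l1" "l1 \<in> L" "s1 \<in> K" unfolding M_def by blast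
      then have "t*a = (t*s1)*r + t*l1" by (simp add: algebra_simps)
      moreover have "t*l1 \<in> L" using li_mult[OF li] h by blast
      moreover have "t*s1 \<in> K" using li_mult[OF K(1)] h by blast
      ultimately show "t*a \<in> M" unfolding M_def by blast
    qed
    moreover have "L \<subseteq> M"
    proof
      fix l assume "l \<in> L"
      moreover have "l = 0 * r + l" by simp
      ultimately show "l \<in> M" unfolding M_def using li_0[OF K(1)] by blast
    qed
    moreover have "k0 * r \<in> M"
    proof -
      have "k0 * r = k0 * r + 0" by simp
      then show ?thesis unfolding M_def using li_0[OF li] k0 by blast
    qed
    ultimately have Mu: "M = UNIV" using max_gen[OF L] k0 by blast
    have "y \<in> K" for y
    proof -
      have "y * r \<in> M" using Mu by simp
      then obtain k l where kl: "y * r = k * r + l" "k \<in> K" "l \<in> L" unfolding M_def by blast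
      then have "(y - k) * r = l" by (simp add: algebra_simps)
      then have "y - k \<in> C" unfolding C_def using kl by simp
      then have "y - k \<in> K" using K by blast
      then have "(y - k) + k \<in> K" using kl li_add[OF K(1)] by blast
      then show ?thesis by simp
    qed
    then show ?thesis by blast
  qed simp
  ultimately show ?thesis unfolding maximal_left_ideal_def C_def by blast
qed

lemma jac_mult:
  assumes L: "maximal_left_ideal L" and x: "x \<in> jacobson"
  shows "x * r \<in> L"
proof (cases "r \<in> L")
  case True
  have "left_ideal L" using L unfolding maximal_left_ideal_def by simp
  then show ?thesis using True unfolding left_ideal_def by simp
next
  case False
  then have "maximal_left_ideal {y. y * r \<in> L}" using colon_max L by blast
  then show ?thesis using x unfolding jacobson_def by blast
qed

lemma exists_max:
  assumes I: "two_sided_ideal I" "I \<noteq> UNIV"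
  shows "\<exists>L. maximal_left_ideal L \<and> I \<subseteq> L"
proof -
  define A where "A = {L. left_ideal L \<and> I \<subseteq> L \<and> 1 \<notin> L}"
  have liI: "left_ideal I" using I ts_li by blast
  have "1 \<notin> I" using li_univ[OF liI] I by blast
  then have ne: "A \<noteq> {}" using liI unfolding A_def by blast
  have "\<exists>M\<in>A. \<forall>X\<in>A. M \<subseteq> X \<longrightarrow> X = M"
  proof (rule subset_Zorn_nonempty[OF ne])
    fix C assume Cne: "C \<noteq> {}" and ch: "subset.chain A C"
    have CA: "C \<subseteq> A" and tot: "\<forall>X\<in>C. \<forall>Y\<in>C. X \<subseteq> Y \<or> Y \<subseteq> X"
      using ch unfolding subset.chain_def by auto
    have Cli: "\<And>X. X \<in> C \<Longrightarrow> left_ideal X" using CA unfolding A_def by blast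
    have "left_ideal (\<Union>C)"
    proof (rule li_intro)
      obtain X where "X \<in> C" using Cne by blast
      then show "0 \<in> \<Union>C" using Cli li_0 by blast
    next
      fix a b assume "a \<in> \<Union>C" "b \<in> \<Union>C"
      then obtain X Y where XY: "X \<in> C" "Y \<in> C" "a \<in> X" "b \<in> Y" by blast
      show "a + b \<in> \<Union>C"
      proof (cases "X \<subseteq> Y")
        case True
        then have "a + b \<in> Y" using XY Cli li_add by blast
        then show ?thesis using XY by blast
      next
        case False
        then have "Y \<subseteq> X" using tot XY by blast
        then have "a + b \<in> X" using XY Cli li_add by blast
        then show ?thesis using XY by blast
      qed
    next
      fix r a assume "a \<in> \<Union>C"
      then obtain X where "X \<in> C" "a \<in> X" by blast
      then have "r * a \<in> X" using Cli li_mult by blast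
      then show "r * a \<in> \<Union>C" using \<open>X \<in> C\<close> by blast
    qed
    moreover have "I \<subseteq> \<Union>C" using Cne CA unfolding A_def by blast
    moreover have "1 \<notin> \<Union>C" using CA unfolding A_def by blast
    ultimately show "\<Union>C \<in> A" unfolding A_def by blast
  qed
  then obtain M where M: "M \<in> A" "\<forall>X\<in>A. M \<subseteq> X \<longrightarrow> X = M" by blast
  have Mli: "left_ideal M" and MI: "I \<subseteq> M" and M1: "1 \<notin> M" using M(1) unfolding A_def by auto
  have "maximal_left_ideal M"
    unfolding maximal_left_ideal_def
  proof (intro conjI allI impI)
    show "left_ideal M" by (rule Mli)
    show "M \<noteq> UNIV" using M1 by blast
  next
    fix X assume X: "left_ideal X \<and> M \<subseteq> X"
    show "X = M \<or> X = UNIV"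
    proof (cases "1 \<in> X")
      case True then show ?thesis using li_univ X by blast
    next
      case False then have "X \<in> A" using X MI unfolding A_def by blast
      then show ?thesis using M X by blast
    qed
  qed
  then show ?thesis using MI by blast
qed

lemma exists_Jprime:
  assumes I: "two_sided_ideal I" "I \<noteq> UNIV"
  shows "\<exists>P\<in>J_spec. I \<subseteq> P"
proof -
  obtain L where L: "maximal_left_ideal L" "I \<subseteq> L" using exists_max[OF I] by blast
  have li: "left_ideal L" using L unfolding maximal_left_ideal_def by simp
  define P where "P = {x. \<forall>r. x * r \<in> L}"
  have tsP: "two_sided_ideal P"
  proof (rule ts_intro)
    show "left_ideal P"
    proof (rule li_intro)
      show "0 \<in> P" unfolding P_def using li_0[OF li] by simp
    next
      fix x y assume "x \<in> P" "y \<in> P" then show "x + y \<in> P"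
        unfolding P_def using li_add[OF li] by (simp add: distrib_right)
    next
      fix t x assume "x \<in> P" then show "t * x \<in> P"
        unfolding P_def using li_mult[OF li] by (simp add: mult.assoc)
    qed
  next
    fix t x assume "x \<in> P" then show "x * t \<in> P"
      unfolding P_def by (simp add: mult.assoc)
  qed
  have "1 \<notin> P"
  proof
    assume "1 \<in> P" then have "1 \<in> L" unfolding P_def by (metis mem_Collect_eq mult_1)
    then show False using li_univ[OF li] L(1) unfolding maximal_left_ideal_def by blast
  qed
  then have Pne: "P \<noteq> UNIV" by blast
  have IP: "I \<subseteq> P"
  proof
    fix x assume "x \<in> I"
    then have "x * r \<in> L" for r using ts_right[OF I(1)] L(2) by blast
    then show "x \<in> P" unfolding P_def by blast
  qed
  moreover have "jacobson \<subseteq> P" unfolding P_def using jac_mult[OF L(1)] by blast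
  moreover have "A \<subseteq> P \<or> B \<subseteq> P"
    if AB: "two_sided_ideal A" "two_sided_ideal B" "\<forall>a\<in>A. \<forall>b\<in>B. a * b \<in> P" for A B
  proof (cases "B \<subseteq> P")
    case False
    then obtain b s where bs: "b \<in> B" "b * s \<notin> L" unfolding P_def by blast
    have "a \<in> P" if a: "a \<in> A" for a
    proof -
      have "a * r \<in> L" for r
      proof -
        obtain y l where yl: "l \<in> L" "r = y * (b * s) + l" using max_span[OF L(1) bs(2)] by blast
        have "y * b \<in> B" using li_mult[OF ts_li[OF AB(2)]] bs by blast
        then have "a * (y * b) \<in> P" using AB(3) a by blast
        then have 1: "a * (y * b) * s \<in> L" unfolding P_def by blast
        have 2: "a * l \<in> L" using li_mult[OF li] yl by blast
        have "a * (y * b) * s + a * l \<in> L" using li_add[OF li 1 2] .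
        moreover have "a * r = a * (y * b) * s + a * l" using yl by (simp add: algebra_simps mult.assoc)
        ultimately show ?thesis by simp
      qed
      then show ?thesis unfolding P_def by blast
    qed
    then show ?thesis by blast
  qed simp
  ultimately have "P \<in> J_spec" using tsP Pne unfolding J_spec_def prime_ideal_def by blast
  then show ?thesis using IP by blast
qed

lemma prime_split:
  assumes P: "P \<in> J_spec" and e: "\<forall>r. e * r * (1 - e) \<in> jacobson"
  shows "e \<in> P \<or> 1 - e \<in> P"
proof -
  have pr: "prime_ideal P" and JP: "jacobson \<subseteq> P" using P unfolding J_spec_def by auto
  have ts: "two_sided_ideal P" using P Jts by blast
  have lp: "left_ideal P" using ts ts_li by blast
  define A where "A = {x. \<forall>r. x * r * (1 - e) \<in> P}"
  define B where "B = {y. \<forall>x\<in>A. x * y \<in> P}"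
  have tsA: "two_sided_ideal A"
  proof (rule ts_intro)
    show "left_ideal A"
    proof (rule li_intro)
      show "0 \<in> A" unfolding A_def using li_0[OF lp] by simp
    next
      fix x y assume "x \<in> A" "y \<in> A" then show "x + y \<in> A"
        unfolding A_def using li_add[OF lp] by (simp add: distrib_right)
    next
      fix t x assume "x \<in> A" then show "t * x \<in> A"
        unfolding A_def using li_mult[OF lp] by (simp add: mult.assoc)
    qed
  next
    fix t x assume "x \<in> A"
    then have "\<forall>r. x * (t * r) * (1 - e) \<in> P" unfolding A_def by blast
    then show "x * t \<in> A" unfolding A_def by (simp add: mult.assoc)
  qed
  have tsB: "two_sided_ideal B"
  proof (rule ts_intro)
    show "left_ideal B"
    proof (rule li_intro)
      show "0 \<in> B" unfolding B_def using li_0[OF lp] by simp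
    next
      fix x y assume "x \<in> B" "y \<in> B" then show "x + y \<in> B"
        unfolding B_def using li_add[OF lp] by (simp add: distrib_left)
    next
      fix t y assume y: "y \<in> B"
      show "t * y \<in> B" unfolding B_def
      proof (intro CollectI ballI)
        fix x assume "x \<in> A"
        then have "x * t \<in> A" using ts_right[OF tsA] by blast
        then have "(x * t) * y \<in> P" using y unfolding B_def by blast
        then show "x * (t * y) \<in> P" by (simp add: mult.assoc)
      qed
    qed
  next
    fix t y assume y: "y \<in> B"
    show "y * t \<in> B" unfolding B_def
    proof (intro CollectI ballI)
      fix x assume "x \<in> A"
      then have "x * y \<in> P" using y unfolding B_def by blast
      then have "(x * y) * t \<in> P" using ts_right[OF ts] by blast
      then show "x * (y * t) \<in> P" by (simp add: mult.assoc)
    qed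
  qed
  have "e \<in> A" using e JP unfolding A_def by blast
  moreover have "1 - e \<in> B" unfolding B_def
  proof (intro CollectI ballI)
    fix x assume "x \<in> A"
    then have "x * 1 * (1 - e) \<in> P" unfolding A_def by blast
    then show "x * (1 - e) \<in> P" by simp
  qed
  moreover have "A \<subseteq> P \<or> B \<subseteq> P"
  proof -
    have "\<forall>a\<in>A. \<forall>b\<in>B. a * b \<in> P" unfolding B_def by blast
    then show ?thesis
      using pr[unfolded prime_ideal_def, THEN conjunct2, THEN conjunct2, rule_format, OF conjI[OF tsA conjI[OF tsB]]] by blast
  qed
  ultimately show ?thesis by blast
qed

lemma full_not_in: "full u \<Longrightarrow> P \<in> J_spec \<Longrightarrow> u \<notin> P"
proof
  assume f: "full u" and P: "P \<in> J_spec" and u: "u \<in> P"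
  have "ideal_gen {u} \<subseteq> P" using ideal_gen_sub[OF Jts[OF P] u] .
  then have "P = UNIV" using f unfolding full_def by blast
  then show False using Jne[OF P] by simp
qed

theorem lemma3p1:
  fixes a :: "'a::ring_1"
  shows "feckly_clean a \<longleftrightarrow>
    (\<exists>e :: 'a. W_elem (a - 1) \<subseteq> W_elem e \<and> W_elem e \<subseteq> J_spec - W_elem a
        \<and> (\<forall>r. e * r * (1 - e) \<in> jacobson))"
proof
  assume "feckly_clean a"
  then obtain e u where eu: "full u" "a = e + u" "\<forall>r. e * r * (1 - e) \<in> jacobson"
    unfolding feckly_clean_def by blast
  have "W_elem (a - 1) \<subseteq> W_elem e"
  proof
    fix P assume "P \<in> W_elem (a - 1)"
    then have P: "P \<in> J_spec" "a - 1 \<in> P" using W_elem_iff by auto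
    have li: "left_ideal P" using P Jli by blast
    have "e \<in> P"
    proof (rule ccontr)
      assume "e \<notin> P"
      then have "1 - e \<in> P" using prime_split[OF P(1) eu(3)] by blast
      then have "(a - 1) + (1 - e) \<in> P" using P li_add[OF li] by blast
      then have "u \<in> P" using eu by (simp add: algebra_simps)
      then show False using full_not_in eu P by blast
    qed
    then show "P \<in> W_elem e" using P W_elem_iff by blast
  qed
  moreover have "W_elem e \<subseteq> J_spec - W_elem a"
  proof
    fix P assume "P \<in> W_elem e"
    then have P: "P \<in> J_spec" "e \<in> P" using W_elem_iff by auto
    have li: "left_ideal P" using P Jli by blast
    have "a \<notin> P"
    proof
      assume "a \<in> P"
      then have "a - e \<in> P" using li_diff[OF li] P by blast
      then have "u \<in> P" using eu(2) by simp
      then show False using full_not_in[OF eu(1) P(1)] by blast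
    qed
    then show "P \<in> J_spec - W_elem a" using P W_elem_iff by blast
  qed
  ultimately show "\<exists>e. W_elem (a - 1) \<subseteq> W_elem e \<and> W_elem e \<subseteq> J_spec - W_elem a
        \<and> (\<forall>r. e * r * (1 - e) \<in> jacobson)" using eu by blast
next
  assume "\<exists>e. W_elem (a - 1) \<subseteq> W_elem e \<and> W_elem e \<subseteq> J_spec - W_elem a
        \<and> (\<forall>r. e * r * (1 - e) \<in> jacobson)"
  then obtain e where e: "W_elem (a - 1) \<subseteq> W_elem e" "W_elem e \<subseteq> J_spec - W_elem a"
    "\<forall>r. e * r * (1 - e) \<in> jacobson" by blast
  have "full (a - e)"
    unfolding full_def
  proof (rule ccontr)
    assume "ideal_gen {a - e} \<noteq> UNIV"
    then obtain P where P: "P \<in> J_spec" "ideal_gen {a - e} \<subseteq> P"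
      using exists_Jprime ideal_gen_ts by blast
    have ae: "a - e \<in> P" using P ideal_gen_mem by blast
    have li: "left_ideal P" using P Jli by blast
    show False
    proof (cases "e \<in> P")
      case True
      then have "(a - e) + e \<in> P" using ae li_add[OF li] by blast
      then have "a \<in> P" by simp
      then have "P \<in> W_elem a" using P(1) W_elem_iff by blast
      moreover have "P \<in> W_elem e" using True P W_elem_iff by blast
      ultimately show False using e by blast
    next
      case False
      then have "1 - e \<in> P" using prime_split[OF P(1) e(3)] by blast
      then have "(a - e) - (1 - e) \<in> P" using ae li_diff[OF li] by blast
      then have "a - 1 \<in> P" by (simp add: algebra_simps)
      then have "P \<in> W_elem e" using e P W_elem_iff by blast
      then show False using False W_elem_iff by blast
    qed
  qed
  then show "feckly_clean a" unfolding feckly_clean_def using e(3)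
    by (metis add.commute diff_add_cancel)
qed

end
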